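(* Let $\mathcal{P}\subset\mathbb{R}^n$ be a convex polytope, symmetric about the origin with nonempty interior, that tiles $\mathbb{R}^n$ by translation, and let $\Vert\cdot\Vert_{\mathcal{P}}$ be the associated norm. Then $m_1(\mathbb{R}^n,\Vert\cdot\Vert_{\mathcal{P}})\geq\frac{1}{2^n}$.
   Context: $\Vert x\Vert_{\mathcal{P}}=\inf\{\lambda\geq0:x\in\lambda\mathcal{P}\}$. $\mathcal{P}$ tiles $\mathbb{R}^n$ by translation if there is $\Lambda\subset\mathbb{R}^n$ with $\bigcup_{\lambda\in\Lambda}(\lambda+\mathcal{P})=\mathbb{R}^n$ and the interiors of $\lambda+\mathcal{P}$ and $\lambda'+\mathcal{P}$ are disjoint for $\lambda\ne\lambda'$. A set $A$ avoids distance $1$ if $\Vert x-y\Vert\neq1$ for all $x,y\in A$. The density of a measurable $A$ is $\delta(A)=\limsup_{R\to\infty}\operatorname{Vol}(A\cap[-R,R]^n)/\operatorname{Vol}([-R,R]^n)$, and $m_1(\mathbb{R}^n,\Vert\cdot\Vert)$ is the supremum of $\delta(A)$ over measurable $A$ avoiding distance $1$. *)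

theory Defs
  imports "HOL-Analysis.Analysis"
begin

definition gauge_norm :: "'a::euclidean_space set \<Rightarrow> 'a \<Rightarrow> real" where
  "gauge_norm P x = Inf {l. l \<ge> 0 \<and> x \<in> (\<lambda>y. l *\<^sub>R y) ` P}"

definition tiles_by_translation :: "'a::euclidean_space set \<Rightarrow> bool" where
  "tiles_by_translation P \<longleftrightarrow> (\<exists>\<Lambda>. (\<Union>t\<in>\<Lambda>. (\<lambda>y. t + y) ` P) = UNIV \<and>
     (\<forall>t\<in>\<Lambda>. \<forall>t'\<in>\<Lambda>. t \<noteq> t' \<longrightarrow>
        interior ((\<lambda>y. t + y) ` P) \<inter> interior ((\<lambda>y. t' + y) ` P) = {}))"

definition avoids_distance_one :: "('a::euclidean_space \<Rightarrow> real) \<Rightarrow> 'a set \<Rightarrow> bool" where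
  "avoids_distance_one nrm A \<longleftrightarrow> (\<forall>x\<in>A. \<forall>y\<in>A. nrm (x - y) \<noteq> 1)"

definition upper_density :: "'a::euclidean_space set \<Rightarrow> ereal" where
  "upper_density A = Limsup at_top (\<lambda>R::real.
     ereal (measure lebesgue (A \<inter> cbox (- (R *\<^sub>R One)) (R *\<^sub>R One))
            / measure lebesgue (cbox (- (R *\<^sub>R One)) (R *\<^sub>R (One::'a)))))"

definition m1 :: "('a::euclidean_space \<Rightarrow> real) \<Rightarrow> ereal" where
  "m1 nrm = Sup {upper_density A | A. A \<in> sets lebesgue \<and> avoids_distance_one nrm A}"

end

theory Submission
  imports Defs "HOL-Real_Asymp.Real_Asymp"
begin

lemma int_neg:
  fixes P :: "'a::euclidean_space set"
  assumes "uminus ` P = P" "b \<in> interior P"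
  shows "- b \<in> interior P"
proof -
  have "interior P = uminus ` interior P" using interior_negations[of P] assms(1) by simp
  moreover have "- b \<in> uminus ` interior P" using assms(2) by (rule imageI)
  ultimately show ?thesis by simp
qed

lemma zero_int:
  fixes P :: "'a::euclidean_space set"
  assumes "convex P" "uminus ` P = P" "interior P \<noteq> {}"
  shows "0 \<in> interior P"
proof -
  obtain a where a: "a \<in> interior P" using assms(3) by blast
  have na: "- a \<in> interior P" using int_neg assms(2) a by blast
  have "(1/2::real) *\<^sub>R a + (1/2::real) *\<^sub>R (-a) \<in> interior P"
    by (rule convexD[OF convex_interior[OF assms(1)] a na]) auto
  then show ?thesis by simp
qed

lemma gauge_lt1:
  fixes P :: "'a::euclidean_space set"
  assumes "z \<in> interior P"
  shows "gauge_norm P z < 1"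
proof -
  obtain e where e: "e > 0" "ball z e \<subseteq> P" using assms mem_interior by blast
  define d where "d = e / (2 * (norm z + 1))"
  have d: "d > 0" using e unfolding d_def by (smt (verit) divide_pos_pos norm_ge_zero)
  have "dist z ((1 + d) *\<^sub>R z) = d * norm z"
    using d by (simp add: dist_norm algebra_simps)
  also have "\<dots> \<le> d * (norm z + 1)" using d by simp
  also have "\<dots> = e / 2"
  proof -
    have gen: "\<And>a::real. a > 0 \<Longrightarrow> e / (2*a) * a = e/2" by simp
    have "norm z + 1 > 0" by (smt (verit) norm_ge_zero)
    from gen[OF this] show ?thesis unfolding d_def .
  qed
  also have "\<dots> < e" using e by simp
  finally have w: "(1 + d) *\<^sub>R z \<in> P" using e by auto
  define S where "S = {l. l \<ge> 0 \<and> z \<in> (\<lambda>y. l *\<^sub>R y) ` P}"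
  have "z = (1 / (1 + d)) *\<^sub>R ((1 + d) *\<^sub>R z)" using d by simp
  then have "1 / (1 + d) \<in> S" using w d unfolding S_def by (auto intro!: image_eqI)
  moreover have "bdd_below S" unfolding S_def bdd_below_def by auto
  ultimately have "Inf S \<le> 1 / (1 + d)" by (rule cInf_lower)
  also have "\<dots> < 1" using d by simp
  finally show ?thesis by (simp add: gauge_norm_def S_def)
qed

lemma gauge_eq1:
  fixes P :: "'a::euclidean_space set"
  assumes "closed P" "0 \<in> interior P" "gauge_norm P z = 1"
  shows "z \<in> P"
proof -
  define S where "S = {l. l \<ge> 0 \<and> z \<in> (\<lambda>y. l *\<^sub>R y) ` P}"
  have nz1: "norm z + 1 > 0" by (smt (verit) norm_ge_zero)
  have gi: "Inf S = 1" using assms(3) by (simp add: gauge_norm_def S_def)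
  obtain r where r: "r > 0" "ball 0 r \<subseteq> P" using assms(2) mem_interior by blast
  define l0 where "l0 = 2 * (norm z + 1) / r"
  have l0: "l0 > 0" using r unfolding l0_def by (smt (verit) divide_pos_pos norm_ge_zero)
  have "norm (z /\<^sub>R l0) = norm z * r / (2 * (norm z + 1))"
    using l0 r by (simp add: l0_def)
  also have "\<dots> < r"
  proof -
    have "norm z * r < r * (2 * (norm z + 1))" 
    proof -
      have a: "0 \<le> norm z * r" using r by simp
      have "norm z * r < 2 * (norm z * r) + 2 * r" using a r by linarith
      also have "\<dots> = r * (2 * (norm z + 1))" by (simp add: algebra_simps)
      finally show ?thesis .
    qed
    moreover have gen: "\<And>a b::real. a > 0 \<Longrightarrow> b < r * a \<Longrightarrow> b / a < r" by (simp add: field_simps)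
    moreover have "2 * (norm z + 1) > 0" by (smt (verit) norm_ge_zero)
    ultimately show ?thesis by (metis mult.commute)
  qed
  finally have "z /\<^sub>R l0 \<in> P" using r by auto
  moreover have "z = l0 *\<^sub>R (z /\<^sub>R l0)" using l0 by simp
  ultimately have "l0 \<in> S" using l0 unfolding S_def by (auto intro!: image_eqI)
  then have Sne: "S \<noteq> {}" by blast
  have bdd: "bdd_below S" unfolding S_def bdd_below_def by auto
  have "z \<in> closure P"
    unfolding closure_approachable
  proof (intro allI impI)
    fix e :: real assume e: "e > 0"
    have "Inf S < 1 + e / (norm z + 1)" using gi divide_pos_pos[OF e nz1] by simp
    then obtain l where l: "l \<in> S" "l < 1 + e / (norm z + 1)" using cInf_lessD[OF Sne] by blast
    have l1: "l \<ge> 1" using cInf_lower[OF l(1) bdd] gi by simp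
    obtain y where y: "y \<in> P" "z = l *\<^sub>R y" using l(1) unfolding S_def by auto
    have ny: "norm y \<le> norm z" using y l1 mult_right_mono[OF l1 norm_ge_zero[of y]] by simp
    have yz: "y - z = (1 - l) *\<^sub>R y" using y by (simp add: scaleR_diff_left)
    have "dist y z = (l - 1) * norm y" unfolding dist_norm yz using l1 by simp
    also have "\<dots> \<le> (l - 1) * norm z" using ny l1 by (simp add: mult_left_mono)
    also have "\<dots> \<le> (e / (norm z + 1)) * norm z" using l l1 by (intro mult_right_mono) auto
    also have "\<dots> < (e / (norm z + 1)) * (norm z + 1)"
      using divide_pos_pos[OF e nz1] by (intro mult_strict_left_mono) auto
    also have "\<dots> = e" using nz1 by simp
    finally show "\<exists>y\<in>P. dist y z < e" using y by blast
  qed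
  then show ?thesis using assms(1) by simp
qed

lemma measure_cube:
  assumes "R \<ge> 0"
  shows "measure lebesgue (cbox (- (R *\<^sub>R One)) (R *\<^sub>R (One::'a::euclidean_space))) = (2*R)^DIM('a)"
  using assms by (simp add: inner_add_left prod_constant)

theorem proposition1:
  fixes P :: "'a::euclidean_space set"
  assumes "polytope P"
    and "convex P"
    and "uminus ` P = P"
    and "interior P \<noteq> {}"
    and "tiles_by_translation P"
  shows "m1 (gauge_norm P) \<ge> ereal (1 / 2 ^ DIM('a))"
proof -
  from assms(5) obtain \<Lambda> where cov: "(\<Union>t\<in>\<Lambda>. (\<lambda>y. t + y) ` P) = UNIV"
    and disj: "\<And>t t'. t\<in>\<Lambda> \<Longrightarrow> t'\<in>\<Lambda> \<Longrightarrow> t \<noteq> t' \<Longrightarrow>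
        interior ((\<lambda>y. t + y) ` P) \<inter> interior ((\<lambda>y. t' + y) ` P) = {}"
    unfolding tiles_by_translation_def by blast
  have cP: "compact P" using assms(1) polytope_imp_compact by blast
  have clP: "closed P" using cP compact_imp_closed by blast
  have bP: "bounded P" using cP compact_imp_bounded by blast
  have z0: "0 \<in> interior P" using zero_int assms(2-4) by blast
  have intT: "interior ((\<lambda>y. t + y) ` P) = (\<lambda>y. t + y) ` interior P" for t
    using interior_translation[of t P] by simp
  have half: "(1/2::real) *\<^sub>R a \<in> interior P" if "a \<in> interior P" for a
    using convexD[OF convex_interior[OF assms(2)] that z0, of "1/2" "1/2"] by simp
  have disj2: "((\<lambda>y. t + y) ` interior P) \<inter> ((\<lambda>y. t' + y) ` interior P) = {}"
    if "t\<in>\<Lambda>" "t'\<in>\<Lambda>" "t \<noteq> t'" for t t'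
    using disj[OF that] by (simp add: intT)
  define A where "A = (\<Union>t\<in>\<Lambda>. (\<lambda>y. t + (1/2::real) *\<^sub>R y) ` interior P)"
  have Aopen: "open A"
  proof -
    have "open ((\<lambda>y. t + (1/2::real) *\<^sub>R y) ` interior P)" for t
    proof -
      have "(\<lambda>y. t + (1/2::real) *\<^sub>R y) ` interior P = (+) t ` ((*\<^sub>R) (1/2) ` interior P)"
        by (auto simp: image_image)
      then show ?thesis using open_translation open_scaling by (metis open_interior zero_neq_numeral divide_eq_0_iff one_neq_zero)
    qed
    then show ?thesis unfolding A_def by blast
  qed
  have Ameas: "A \<in> sets lebesgue"
    using Aopen borel_open sets_completionI_sets by (metis sets_lborel)
  have avoid: "avoids_distance_one (gauge_norm P) A"
    unfolding avoids_distance_one_def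
  proof (intro ballI notI)
    fix x y assume "x \<in> A" "y \<in> A" and eq: "gauge_norm P (x - y) = 1"
    then obtain t a t' b where t: "t \<in> \<Lambda>" and a: "a \<in> interior P" and x: "x = t + (1/2::real) *\<^sub>R a"
      and t': "t' \<in> \<Lambda>" and b: "b \<in> interior P" and y: "y = t' + (1/2::real) *\<^sub>R b"
      unfolding A_def by blast
    have nb: "- b \<in> interior P" using int_neg assms(3) b by blast
    have c: "(1/2::real) *\<^sub>R a + (1/2::real) *\<^sub>R (- b) \<in> interior P"
      by (rule convexD[OF convex_interior[OF assms(2)] a nb]) auto
    define c where "c = (1/2::real) *\<^sub>R a + (1/2::real) *\<^sub>R (- b)"
    have xy: "x - y = (t - t') + c" unfolding x y c_def by (simp add: algebra_simps)
    show False
    proof (cases "t = t'")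
      case True
      then have "x - y \<in> interior P" using c xy c_def by simp
      then show False using gauge_lt1[of "x - y" P] eq by simp
    next
      case False
      have wP: "x - y \<in> P" using gauge_eq1[OF clP z0 eq] .
      have "P \<subseteq> closure (interior P)"
        using convex_closure_interior[OF assms(2,4)] closure_subset by blast
      then have w: "x - y \<in> closure (interior P)" using wP by blast
      define U where "U = (\<lambda>y. (t - t') + y) ` interior P"
      have Uo: "open U" unfolding U_def using open_translation by (metis open_interior)
      have "x - y \<in> U" unfolding U_def xy using c c_def by blast
      then have "U \<inter> closure (interior P) \<noteq> {}" using w by blast
      then have "U \<inter> interior P \<noteq> {}" using open_Int_closure_eq_empty[OF Uo] by blast
      then obtain c' where c': "c' \<in> interior P" "(t - t') + c' \<in> interior P" unfolding U_def by blast
      have "t + c' \<in> (\<lambda>y. t + y) ` interior P" using c' by blast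
      moreover have "t + c' \<in> (\<lambda>y. t' + y) ` interior P"
        using c' by (force intro: image_eqI[of _ _ "(t - t') + c'"])
      ultimately show False using disj2[OF t t' False] by blast
    qed
  qed
  obtain D where D: "D > 0" "\<And>x. x \<in> P \<Longrightarrow> norm x \<le> D"
    using bP bounded_pos by blast
  define Q where "Q R = cbox (- (R *\<^sub>R One)) (R *\<^sub>R (One::'a))" for R
  define n where "n = DIM('a)"
  define mP where "mP = measure lebesgue P"
  have mQ: "measure lebesgue (Q R) = (2*R)^n" if "R \<ge> 0" for R
    unfolding Q_def n_def using measure_cube[OF that] .
  have mPint: "measure lebesgue (interior P) = mP"
    unfolding mP_def using measure_interior[OF bP negligible_convex_frontier[OF assms(2)]] .
  have intmeas: "interior P \<in> lmeasurable" using lmeasurable_interior[OF bP] .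
  have mPpos: "mP > 0"
  proof -
    have "\<not> negligible (interior P)" using open_not_negligible[of "interior P"] assms(4) by simp
    then have "measure lebesgue (interior P) \<noteq> 0" using negligible_iff_measure0[OF intmeas] by simp
    then show ?thesis using mPint measure_nonneg[of lebesgue "interior P"] by simp
  qed
  have mhalf: "measure lebesgue ((\<lambda>y. t + (1/2::real) *\<^sub>R y) ` interior P) = mP / 2^n" for t
  proof -
    have ef: "(\<lambda>y. t + (1/2::real) *\<^sub>R y) = (\<lambda>y. (1/2::real) *\<^sub>R y + t)" by (auto simp: add.commute)
    show ?thesis unfolding ef using measure_lebesgue_affine[of "1/2::real" t "interior P"] mPint
      by (simp add: n_def power_one_over)
  qed
  have mT: "measure lebesgue ((\<lambda>y. t + y) ` P) = mP" for t
    using measure_translation[of t P] unfolding mP_def by simp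
  have mTi: "measure lebesgue ((\<lambda>y. t + y) ` interior P) = mP" for t
    using measure_translation[of t "interior P"] mPint by simp
  have Tcomp: "compact ((\<lambda>y. t + y) ` P)" for t
    using compact_translation[OF cP, of t] by simp
  have Ho: "open ((\<lambda>y. t + (1/2::real) *\<^sub>R y) ` interior P)" for t
  proof -
    have "(\<lambda>y. t + (1/2::real) *\<^sub>R y) ` interior P = (+) t ` ((*\<^sub>R) (1/2) ` interior P)"
      by (auto simp: image_image)
    then show ?thesis using open_translation open_scaling by (metis open_interior zero_neq_numeral divide_eq_0_iff one_neq_zero)
  qed
  have Tio: "open ((\<lambda>y. t + y) ` interior P)" for t
    using open_translation[of "interior P" t] by simp
  have Hsub: "(\<lambda>y. t + (1/2::real) *\<^sub>R y) ` interior P \<subseteq> (\<lambda>y. t + y) ` interior P" for t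
    using half by auto
  have Tisub: "(\<lambda>y. t + y) ` interior P \<subseteq> (\<lambda>y. t + y) ` P" for t
    using interior_subset by blast
  have Tib: "bounded ((\<lambda>y. t + y) ` interior P)" for t
    using bounded_subset[OF compact_imp_bounded[OF Tcomp] Tisub] .
  have Tim: "(\<lambda>y. t + y) ` interior P \<in> lmeasurable" for t
    using lmeasurable_open[OF Tib Tio] .
  have Hm: "(\<lambda>y. t + (1/2::real) *\<^sub>R y) ` interior P \<in> lmeasurable" for t
    using lmeasurable_open[OF bounded_subset[OF Tib Hsub] Ho] .
  have Tm: "(\<lambda>y. t + y) ` P \<in> lmeasurable" for t
    using lmeasurable_compact[OF Tcomp] .
  have cubeB: "y \<in> Q R" if "x \<in> Q (R - 2*D)" "norm (y - x) \<le> 2*D" for x y R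
    unfolding Q_def mem_box(2)
  proof (intro ballI)
    fix i :: 'a assume i: "i \<in> Basis"
    have "\<bar>(y - x) \<bullet> i\<bar> \<le> norm (y - x)" using Basis_le_norm[OF i] .
    moreover have "- (R - 2*D) \<le> x \<bullet> i \<and> x \<bullet> i \<le> R - 2*D" using that(1) i by (auto simp: Q_def mem_box)
    ultimately show "(- (R *\<^sub>R One)) \<bullet> i \<le> y \<bullet> i \<and> y \<bullet> i \<le> (R *\<^sub>R One) \<bullet> i"
      using that(2) i by (auto simp: inner_diff_left)
  qed
  have key: "measure lebesgue (Q (R - 2*D)) \<le> 2^n * measure lebesgue (A \<inter> Q R)" if R: "R \<ge> 2*D" for R
  proof -
    define L where "L = {t\<in>\<Lambda>. (\<lambda>y. t + y) ` P \<subseteq> Q R}"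
    have pdT: "pairwise (\<lambda>i j. disjnt ((\<lambda>y. i + y) ` interior P) ((\<lambda>y. j + y) ` interior P)) G"
      if "G \<subseteq> \<Lambda>" for G
      using that disj2 unfolding pairwise_def disjnt_def by blast
    have pdH: "pairwise (\<lambda>i j. disjnt ((\<lambda>y. i + (1/2::real) *\<^sub>R y) ` interior P) ((\<lambda>y. j + (1/2::real) *\<^sub>R y) ` interior P)) G"
      if "G \<subseteq> \<Lambda>" for G
    proof -
      have "(\<lambda>y. i + (1/2::real) *\<^sub>R y) ` interior P \<inter> (\<lambda>y. j + (1/2::real) *\<^sub>R y) ` interior P = {}"
        if "i \<in> \<Lambda>" "j \<in> \<Lambda>" "i \<noteq> j" for i j
        using disj2[OF that] Hsub[of i] Hsub[of j] by blast
      then show ?thesis using \<open>G \<subseteq> \<Lambda>\<close> unfolding pairwise_def disjnt_def by blast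
    qed
    have Lfin: "finite L"
    proof -
      have "card G \<le> nat \<lceil>(2*R)^n / mP\<rceil>" if G: "G \<subseteq> L" "finite G" for G
      proof -
        have GL: "G \<subseteq> \<Lambda>" using G L_def by blast
        have "real (card G) * mP = (\<Sum>t\<in>G. measure lebesgue ((\<lambda>y. t + y) ` interior P))"
          by (simp add: mTi)
        also have "\<dots> = measure lebesgue (\<Union>t\<in>G. (\<lambda>y. t + y) ` interior P)"
          by (rule measure_UNION'[symmetric]) (use G Tim pdT[OF GL] in auto)
        also have "\<dots> \<le> measure lebesgue (Q R)"
        proof (rule measure_mono_fmeasurable)
          show "(\<Union>t\<in>G. (\<lambda>y. t + y) ` interior P) \<subseteq> Q R" using G Tisub unfolding L_def by blast
          show "(\<Union>t\<in>G. (\<lambda>y. t + y) ` interior P) \<in> sets lebesgue"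
            using G(2) Tim by (intro sets.finite_UN) (auto intro: fmeasurableD)
          show "Q R \<in> fmeasurable lebesgue" unfolding Q_def by simp
        qed
        also have "\<dots> = (2*R)^n" using mQ R D by simp
        finally have "real (card G) \<le> (2*R)^n / mP" using mPpos by (simp add: field_simps)
        then show ?thesis by (metis ceiling_mono ceiling_of_nat nat_int nat_mono)
      qed
      then show ?thesis using finite_if_finite_subsets_card_bdd by blast
    qed
    have LL: "L \<subseteq> \<Lambda>" unfolding L_def by blast
    have "Q (R - 2*D) \<subseteq> (\<Union>t\<in>L. (\<lambda>y. t + y) ` P)"
    proof
      fix x assume x: "x \<in> Q (R - 2*D)"
      have "x \<in> (\<Union>t\<in>\<Lambda>. (\<lambda>y. t + y) ` P)" using cov by blast
      then obtain t p where t: "t \<in> \<Lambda>" and p: "p \<in> P" and xe: "x = t + p" by blast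
      have "(\<lambda>y. t + y) ` P \<subseteq> Q R"
      proof
        fix z assume "z \<in> (\<lambda>y. t + y) ` P"
        then obtain q where q: "q \<in> P" "z = t + q" by blast
        have "norm (z - x) = norm (q - p)" using q xe by simp
        also have "\<dots> \<le> norm q + norm p" by (rule norm_triangle_ineq4)
        also have "\<dots> \<le> 2 * D" using D(2)[OF q(1)] D(2)[OF p] by simp
        finally show "z \<in> Q R" using cubeB[OF x] by blast
      qed
      then show "x \<in> (\<Union>t\<in>L. (\<lambda>y. t + y) ` P)" using t p xe unfolding L_def by blast
    qed
    then have "measure lebesgue (Q (R - 2*D)) \<le> measure lebesgue (\<Union>t\<in>L. (\<lambda>y. t + y) ` P)"
      by (rule measure_mono_fmeasurable)
         (auto simp: Q_def intro!: lmeasurable_compact compact_UN Lfin Tcomp)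
    also have "\<dots> \<le> (\<Sum>t\<in>L. measure lebesgue ((\<lambda>y. t + y) ` P))"
      by (rule measure_UNION_le) (use Lfin Tm in \<open>auto intro: fmeasurableD\<close>)
    also have "\<dots> = 2^n * (\<Sum>t\<in>L. measure lebesgue ((\<lambda>y. t + (1/2::real) *\<^sub>R y) ` interior P))"
      by (simp add: mT mhalf)
    also have "(\<Sum>t\<in>L. measure lebesgue ((\<lambda>y. t + (1/2::real) *\<^sub>R y) ` interior P))
        = measure lebesgue (\<Union>t\<in>L. (\<lambda>y. t + (1/2::real) *\<^sub>R y) ` interior P)"
      by (rule measure_UNION'[symmetric]) (use Lfin Hm pdH[OF LL] in auto)
    also have "measure lebesgue (\<Union>t\<in>L. (\<lambda>y. t + (1/2::real) *\<^sub>R y) ` interior P)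
        \<le> measure lebesgue (A \<inter> Q R)"
    proof (rule measure_mono_fmeasurable)
      show "(\<Union>t\<in>L. (\<lambda>y. t + (1/2::real) *\<^sub>R y) ` interior P) \<subseteq> A \<inter> Q R"
        using LL Hsub Tisub unfolding A_def L_def by blast
      show "(\<Union>t\<in>L. (\<lambda>y. t + (1/2::real) *\<^sub>R y) ` interior P) \<in> sets lebesgue"
        using Lfin Hm by (intro sets.finite_UN) (auto intro: fmeasurableD)
      show "A \<inter> Q R \<in> fmeasurable lebesgue"
        using fmeasurable_Int_fmeasurable[of "Q R" lebesgue A] Ameas unfolding Q_def
        by (simp add: Int_commute)
    qed
    finally show ?thesis by simp
  qed
  have ev: "\<forall>\<^sub>F R in at_top. ereal (((R - 2*D)/R)^n / 2^n)
      \<le> ereal (measure lebesgue (A \<inter> Q R) / measure lebesgue (Q R))"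
  proof (rule eventually_at_top_linorder[THEN iffD2], intro exI allI impI)
    fix R :: real assume R: "R \<ge> 2*D"
    have Rp: "R > 0" using R D by simp
    have k: "(2*(R - 2*D))^n \<le> 2^n * measure lebesgue (A \<inter> Q R)"
      using key[OF R] mQ[of "R - 2*D"] R by simp
    moreover have "(2*(R - 2*D))^n = 2^n * (R - 2*D)^n" by (simp only: power_mult_distrib)
    ultimately have "2^n * (R - 2*D)^n \<le> 2^n * measure lebesgue (A \<inter> Q R)" by simp
    then have k2: "(R - 2*D)^n \<le> measure lebesgue (A \<inter> Q R)"
      by (simp add: mult_le_cancel_left_pos)
    have "((R - 2*D)/R)^n / 2^n = (R - 2*D)^n / (2^n * R^n)"
      by (simp add: power_divide)
    also have "\<dots> \<le> measure lebesgue (A \<inter> Q R) / (2^n * R^n)"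
      using k2 Rp by (intro divide_right_mono) auto
    also have "\<dots> = measure lebesgue (A \<inter> Q R) / measure lebesgue (Q R)"
      using mQ[of R] Rp by (simp add: power_mult_distrib)
    finally show "ereal (((R - 2*D)/R)^n / 2^n)
      \<le> ereal (measure lebesgue (A \<inter> Q R) / measure lebesgue (Q R))" by simp
  qed
  have l1: "((\<lambda>R. (R - 2*D)/R) \<longlongrightarrow> 1) at_top" by real_asymp
  have "((\<lambda>R. ((R - 2*D)/R)^n / 2^n) \<longlongrightarrow> 1^n / 2^n) at_top"
    using l1 by (intro tendsto_intros) auto
  then have l2: "((\<lambda>R. ereal (((R - 2*D)/R)^n / 2^n)) \<longlongrightarrow> ereal (1 / 2^n)) at_top"
    by (intro tendsto_ereal) simp
  have "ereal (1 / 2^n) = Limsup at_top (\<lambda>R. ereal (((R - 2*D)/R)^n / 2^n))"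
    using lim_imp_Limsup[OF _ l2] by simp
  also have "\<dots> \<le> upper_density A"
    unfolding upper_density_def using Limsup_mono[OF ev] unfolding Q_def .
  also have "\<dots> \<le> m1 (gauge_norm P)"
    unfolding m1_def by (rule Sup_upper) (use Ameas avoid in blast)
  finally show ?thesis unfolding n_def .
qed

end
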